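(* Let $\Phi:\{0,1\}^n\to\{0,1\}^n$, $\mu\in\{0,1\}^n$ and $\rho\in P_n$. Then: a) $\overline{W}[\Phi^\rho(\mu,\cdot)]=\overline{W}[\omega_\rho(\mu)]$; b) $Or_\rho(\mu)\subset\overline{W}[\Phi^\rho(\mu,\cdot)]$, so $\overline{W}[\Phi^\rho(\mu,\cdot)]\neq\emptyset$; c) $\underline{W}[\Phi^\rho(\mu,\cdot)]\subset\underline{W}[\omega_\rho(\mu)]$; d) $\underline{W}[\Phi^\rho(\mu,\cdot)]\neq\emptyset$ if and only if $\omega_\rho(\mu)$ has exactly one element; thus if $\omega_\rho(\mu)$ has exactly one element, then $\underline{W}[\Phi^\rho(\mu,\cdot)]$ and $\underline{W}[\omega_\rho(\mu)]$ are non-empty; e) if $\omega_\rho(\mu)=\{\mu'\}$ for some $\mu'\in\mathbf{B}^n$, then $\underline{W}[\Phi^\rho(\mu,\cdot)]=\underline{W}[\omega_\rho(\mu)]=\underline{W}(\mu')$.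
   Context: Let $\mathbf{B}=\{0,1\}$ (discrete topology), $n\ge1$, $\Phi:\mathbf{B}^n\to\mathbf{B}^n$. For $\nu\in\mathbf{B}^n$: $\Phi^\nu_i(\mu)=\mu_i$ if $\nu_i=0$, $=\Phi_i(\mu)$ if $\nu_i=1$; $\Phi^{\alpha^0\dots\alpha^k}=\Phi^{\alpha^k}\circ\cdots\circ\Phi^{\alpha^0}$. A sequence $(\alpha^k)_{k\in\mathbf{N}}$ in $\mathbf{B}^n$ is progressive if each $\{k:\alpha^k_i=1\}$ is infinite. $Seq$ = strictly increasing real sequences unbounded above. $P_n$ = functions $\rho:\mathbf{R}\to\mathbf{B}^n$ with $\rho(t_k)=\alpha^k$, $\rho(t)=0$ for $t\notin\{t_k\}$, where $\alpha$ progressive, $(t_k)\in Seq$. Orbit: $\Phi^\rho(\mu,t)=\mu$ for $t<t_0$, $=\Phi^{\alpha^0\dots\alpha^k}(\mu)$ for $t\in[t_k,t_{k+1})$; $Or_\rho(\mu)=\{\Phi^\rho(\mu,t):t\in\mathbf{R}\}$. $\omega_\rho(\mu)=\{\mu':\exists(s_k)\in Seq,\ \Phi^\rho(\mu,s_k)=\mu'$ for all large $k\}$. For a point $\mu'$: $\underline{W}(\mu')=\{\mu'':\forall\rho'\in P_n,\ \omega_{\rho'}(\mu'')\subset\{\mu'\}\}$. Basins of the orbit and of the $\omega$-limit set: $\overline{W}[\Phi^\rho(\mu,\cdot)]=\{\mu':\exists\rho'\in P_n,\exists t'\in\mathbf{R},\forall t\ge t',\ \Phi^{\rho'}(\mu',t)=\Phi^\rho(\mu,t)\}$,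 $\underline{W}[\Phi^\rho(\mu,\cdot)]=\{\mu':\forall\rho'\in P_n,\exists t'\in\mathbf{R},\forall t\ge t',\ \Phi^{\rho'}(\mu',t)=\Phi^\rho(\mu,t)\}$, $\overline{W}[\omega_\rho(\mu)]=\{\mu':\exists\rho'\in P_n,\ \omega_{\rho'}(\mu')=\omega_\rho(\mu)\}$, $\underline{W}[\omega_\rho(\mu)]=\{\mu':\forall\rho'\in P_n,\ \omega_{\rho'}(\mu')=\omega_\rho(\mu)\}$. *)

theory Defs
  imports Main "HOL-Library.Infinite_Set" Complex_Main
begin

text \<open>Points of B^n are functions 'n \<Rightarrow> bool for a finite index type 'n (n = CARD('n)).\<close>

definition Phi_nu :: "(('n \<Rightarrow> bool) \<Rightarrow> ('n \<Rightarrow> bool)) \<Rightarrow> ('n \<Rightarrow> bool) \<Rightarrow> ('n \<Rightarrow> bool) \<Rightarrow> ('n \<Rightarrow> bool)" where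
  "Phi_nu Phi nu mu = (\<lambda>i. if nu i then Phi mu i else mu i)"

fun Phi_comp :: "(('n \<Rightarrow> bool) \<Rightarrow> ('n \<Rightarrow> bool)) \<Rightarrow> (nat \<Rightarrow> 'n \<Rightarrow> bool) \<Rightarrow> nat \<Rightarrow> ('n \<Rightarrow> bool) \<Rightarrow> ('n \<Rightarrow> bool)" where
  "Phi_comp Phi alpha 0 mu = Phi_nu Phi (alpha 0) mu"
| "Phi_comp Phi alpha (Suc k) mu = Phi_nu Phi (alpha (Suc k)) (Phi_comp Phi alpha k mu)"

definition progressive :: "(nat \<Rightarrow> 'n \<Rightarrow> bool) \<Rightarrow> bool" where
  "progressive alpha \<longleftrightarrow> (\<forall>i. infinite {k. alpha k i})"

definition Seq :: "(nat \<Rightarrow> real) set" where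
  "Seq = {t. strict_mono t \<and> (\<forall>M. \<exists>k. M < t k)}"

definition represents :: "(real \<Rightarrow> 'n \<Rightarrow> bool) \<Rightarrow> (nat \<Rightarrow> 'n \<Rightarrow> bool) \<Rightarrow> (nat \<Rightarrow> real) \<Rightarrow> bool" where
  "represents rho alpha t \<longleftrightarrow> progressive alpha \<and> t \<in> Seq \<and> (\<forall>k. rho (t k) = alpha k)
     \<and> (\<forall>s. s \<notin> range t \<longrightarrow> rho s = (\<lambda>_. False))"

definition P_n :: "(real \<Rightarrow> 'n \<Rightarrow> bool) set" where
  "P_n = {rho. \<exists>alpha t. represents rho alpha t}"

definition orbit_at :: "(('n \<Rightarrow> bool) \<Rightarrow> ('n \<Rightarrow> bool)) \<Rightarrow> (nat \<Rightarrow> 'n \<Rightarrow> bool) \<Rightarrow> (nat \<Rightarrow> real) \<Rightarrow> ('n \<Rightarrow> bool) \<Rightarrow> real \<Rightarrow> ('n \<Rightarrow> bool)" where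
  "orbit_at Phi alpha t mu s =
     (if s < t 0 then mu else Phi_comp Phi alpha (THE k. t k \<le> s \<and> s < t (Suc k)) mu)"

text \<open>Phi^rho(mu, s), computed from some representation (alpha, t) of rho
  (the value does not depend on the chosen representation).\<close>
definition Phi_rho :: "(('n \<Rightarrow> bool) \<Rightarrow> ('n \<Rightarrow> bool)) \<Rightarrow> (real \<Rightarrow> 'n \<Rightarrow> bool) \<Rightarrow> ('n \<Rightarrow> bool) \<Rightarrow> real \<Rightarrow> ('n \<Rightarrow> bool)" where
  "Phi_rho Phi rho mu s =
     (let r = (SOME r. represents rho (fst r) (snd r)) in orbit_at Phi (fst r) (snd r) mu s)"

definition Or_rho :: "(('n \<Rightarrow> bool) \<Rightarrow> ('n \<Rightarrow> bool)) \<Rightarrow> (real \<Rightarrow> 'n \<Rightarrow> bool) \<Rightarrow> ('n \<Rightarrow> bool) \<Rightarrow> ('n \<Rightarrow> bool) set" where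
  "Or_rho Phi rho mu = range (Phi_rho Phi rho mu)"

definition omega_rho :: "(('n \<Rightarrow> bool) \<Rightarrow> ('n \<Rightarrow> bool)) \<Rightarrow> (real \<Rightarrow> 'n \<Rightarrow> bool) \<Rightarrow> ('n \<Rightarrow> bool) \<Rightarrow> ('n \<Rightarrow> bool) set" where
  "omega_rho Phi rho mu = {mu'. \<exists>s \<in> Seq. \<forall>\<^sub>F k in sequentially. Phi_rho Phi rho mu (s k) = mu'}"

definition W_low_pt :: "(('n \<Rightarrow> bool) \<Rightarrow> ('n \<Rightarrow> bool)) \<Rightarrow> ('n \<Rightarrow> bool) \<Rightarrow> ('n \<Rightarrow> bool) set" where
  "W_low_pt Phi mu' = {mu''. \<forall>rho' \<in> P_n. omega_rho Phi rho' mu'' \<subseteq> {mu'}}"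

definition W_up_orb :: "(('n \<Rightarrow> bool) \<Rightarrow> ('n \<Rightarrow> bool)) \<Rightarrow> (real \<Rightarrow> 'n \<Rightarrow> bool) \<Rightarrow> ('n \<Rightarrow> bool) \<Rightarrow> ('n \<Rightarrow> bool) set" where
  "W_up_orb Phi rho mu = {mu'. \<exists>rho' \<in> P_n. \<exists>t'. \<forall>t\<ge>t'. Phi_rho Phi rho' mu' t = Phi_rho Phi rho mu t}"

definition W_low_orb :: "(('n \<Rightarrow> bool) \<Rightarrow> ('n \<Rightarrow> bool)) \<Rightarrow> (real \<Rightarrow> 'n \<Rightarrow> bool) \<Rightarrow> ('n \<Rightarrow> bool) \<Rightarrow> ('n \<Rightarrow> bool) set" where
  "W_low_orb Phi rho mu = {mu'. \<forall>rho' \<in> P_n. \<exists>t'. \<forall>t\<ge>t'. Phi_rho Phi rho' mu' t = Phi_rho Phi rho mu t}"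

definition W_up_omega :: "(('n \<Rightarrow> bool) \<Rightarrow> ('n \<Rightarrow> bool)) \<Rightarrow> (real \<Rightarrow> 'n \<Rightarrow> bool) \<Rightarrow> ('n \<Rightarrow> bool) \<Rightarrow> ('n \<Rightarrow> bool) set" where
  "W_up_omega Phi rho mu = {mu'. \<exists>rho' \<in> P_n. omega_rho Phi rho' mu' = omega_rho Phi rho mu}"

definition W_low_omega :: "(('n \<Rightarrow> bool) \<Rightarrow> ('n \<Rightarrow> bool)) \<Rightarrow> (real \<Rightarrow> 'n \<Rightarrow> bool) \<Rightarrow> ('n \<Rightarrow> bool) \<Rightarrow> ('n \<Rightarrow> bool) set" where
  "W_low_omega Phi rho mu = {mu'. \<forall>rho' \<in> P_n. omega_rho Phi rho' mu' = omega_rho Phi rho mu}"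

end

theory Submission
  imports Defs
begin

abbreviation Z0 :: "'n \<Rightarrow> bool" where "Z0 \<equiv> (\<lambda>_. False)"

lemma Phi_nu_zero[simp]: "Phi_nu Phi Z0 x = x"
  by (simp add: Phi_nu_def)

definition Good :: "(('n\<Rightarrow>bool)\<Rightarrow>('n\<Rightarrow>bool)) \<Rightarrow> (real \<Rightarrow> 'n \<Rightarrow> bool) \<Rightarrow> ('n\<Rightarrow>bool) \<Rightarrow> (real \<Rightarrow> 'n\<Rightarrow>bool) \<Rightarrow> bool" where
"Good Phi rho x Ob \<longleftrightarrow> (\<exists>T. \<forall>s<T. Ob s = x)
  \<and> (\<forall>s1 s2. s1 \<le> s2 \<longrightarrow> (\<forall>q. s1<q \<and> q\<le>s2 \<longrightarrow> rho q = Z0) \<longrightarrow> Ob s1 = Ob s2)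
  \<and> (\<forall>s r. s < r \<longrightarrow> (\<forall>q. s<q \<and> q<r \<longrightarrow> rho q = Z0) \<longrightarrow> Ob r = Phi_nu Phi (rho r) (Ob s))"

lemma Good_init: "Good Phi rho x Ob \<Longrightarrow> \<exists>T. \<forall>s<T. Ob s = x"
  by (simp add: Good_def)
lemma Good_const: "Good Phi rho x Ob \<Longrightarrow> s1 \<le> s2 \<Longrightarrow> (\<And>q. s1<q \<Longrightarrow> q\<le>s2 \<Longrightarrow> rho q = Z0) \<Longrightarrow> Ob s1 = Ob s2"
  unfolding Good_def by blast
lemma Good_jump: "Good Phi rho x Ob \<Longrightarrow> s < r \<Longrightarrow> (\<And>q. s<q \<Longrightarrow> q<r \<Longrightarrow> rho q = Z0) \<Longrightarrow> Ob r = Phi_nu Phi (rho r) (Ob s)"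
  unfolding Good_def by blast

definition LF :: "(real \<Rightarrow> 'n \<Rightarrow> bool) \<Rightarrow> bool" where
  "LF rho \<longleftrightarrow> (\<forall>s. finite {q. rho q \<noteq> Z0 \<and> q \<le> s})"

lemma Good_unique_aux:
  assumes lf: "LF rho" and g1: "Good Phi rho x O1" and g2: "Good Phi rho x O2"
  shows "\<forall>s. card {q. rho q \<noteq> Z0 \<and> q \<le> s} = n \<longrightarrow> O1 s = O2 s"
proof (induction n)
  case 0
  show ?case
  proof (intro allI impI)
    fix s assume c: "card {q. rho q \<noteq> Z0 \<and> q \<le> s} = 0"
    have fin: "finite {q. rho q \<noteq> Z0 \<and> q \<le> s}" using lf LF_def by blast
    hence emp: "{q. rho q \<noteq> Z0 \<and> q \<le> s} = {}" using c by simp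
    obtain T1 where T1: "\<forall>s<T1. O1 s = x" using Good_init[OF g1] by blast
    obtain T2 where T2: "\<forall>s<T2. O2 s = x" using Good_init[OF g2] by blast
    define s0 where "s0 = min (min T1 T2) s - 1"
    have "O1 s0 = O1 s" by (rule Good_const[OF g1]) (use emp s0_def in auto)
    moreover have "O2 s0 = O2 s" by (rule Good_const[OF g2]) (use emp s0_def in auto)
    moreover have "O1 s0 = x" "O2 s0 = x" using T1 T2 s0_def by auto
    ultimately show "O1 s = O2 s" by simp
  qed
next
  case (Suc n)
  show ?case
  proof (intro allI impI)
    fix s assume c: "card {q. rho q \<noteq> Z0 \<and> q \<le> s} = Suc n"
    define A where "A = {q. rho q \<noteq> Z0 \<and> q \<le> s}"
    have fin: "finite A" using lf LF_def A_def by blast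
    have ne: "A \<noteq> {}" using c A_def by (metis card.empty nat.distinct(1))
    define r where "r = Max A"
    have rA: "r \<in> A" using fin ne r_def by simp
    have rmax: "\<And>q. q \<in> A \<Longrightarrow> q \<le> r" using fin r_def by simp
    have rs: "r \<le> s" using rA A_def by simp
    have zq: "\<And>q. r < q \<Longrightarrow> q \<le> s \<Longrightarrow> rho q = Z0"
    proof (rule ccontr)
      fix q assume "r < q" "q \<le> s" "rho q \<noteq> Z0"
      hence "q \<in> A" using A_def by simp
      thus False using rmax[OF \<open>q \<in> A\<close>] \<open>r < q\<close> by simp
    qed
    have e1: "O1 r = O1 s" "O2 r = O2 s"
      using Good_const[OF g1 rs zq] Good_const[OF g2 rs zq] by auto
    define Z' where "Z' = {q. rho q \<noteq> Z0 \<and> q < r}"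
    have Z'sub: "Z' \<subseteq> A" using Z'_def A_def rA by auto
    have finZ': "finite Z'" using finite_subset[OF Z'sub fin] .
    have Aeq: "A = insert r Z'"
    proof
      show "A \<subseteq> insert r Z'"
      proof
        fix q assume qA: "q \<in> A"
        have "q \<le> r" using rmax[OF qA] .
        thus "q \<in> insert r Z'" using qA A_def Z'_def by (cases "q = r") auto
      qed
      show "insert r Z' \<subseteq> A" using Z'sub rA by blast
    qed
    have rZ': "r \<notin> Z'" using Z'_def by auto
    have cZ': "card Z' = n" using c Aeq rZ' finZ' A_def by simp
    define s' where "s' = (if Z' = {} then r - 1 else Max Z')"
    have s'r: "s' < r"
    proof (cases "Z' = {}")
      case True thus ?thesis using s'_def by simp
    next
      case False
      hence "Max Z' \<in> Z'" using finZ' by simp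
      thus ?thesis using s'_def False Z'_def by simp
    qed
    have Zs': "{q. rho q \<noteq> Z0 \<and> q \<le> s'} = Z'"
    proof (cases "Z' = {}")
      case True
      have "\<And>q. rho q \<noteq> Z0 \<Longrightarrow> q \<le> s' \<Longrightarrow> False"
      proof -
        fix q assume "rho q \<noteq> Z0" "q \<le> s'"
        hence "q \<in> Z'" using True s'_def Z'_def by simp
        thus False using True by simp
      qed
      thus ?thesis using True by blast
    next
      case False
      have "Max Z' \<in> Z'" using False finZ' by simp
      hence "Max Z' < r" using Z'_def by simp
      have sM: "s' = Max Z'" using s'_def False by simp
      show ?thesis
      proof
        show "{q. rho q \<noteq> Z0 \<and> q \<le> s'} \<subseteq> Z'" using sM \<open>Max Z' < r\<close> Z'_def by auto
        show "Z' \<subseteq> {q. rho q \<noteq> Z0 \<and> q \<le> s'}" using sM finZ' Z'_def by auto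
      qed
    qed
    have IH: "O1 s' = O2 s'" using Suc.IH Zs' cZ' by simp
    have gap: "\<And>q. s' < q \<Longrightarrow> q < r \<Longrightarrow> rho q = Z0"
    proof -
      fix q assume "s' < q" "q < r"
      show "rho q = Z0"
      proof (rule ccontr)
        assume "rho q \<noteq> Z0"
        hence "q \<in> Z'" using \<open>q < r\<close> Z'_def by simp
        hence "Z' \<noteq> {}" by blast
        hence "q \<le> s'" using s'_def finZ' \<open>q \<in> Z'\<close> by simp
        thus False using \<open>s' < q\<close> by simp
      qed
    qed
    have "O1 r = Phi_nu Phi (rho r) (O1 s')" by (rule Good_jump[OF g1 s'r gap])
    moreover have "O2 r = Phi_nu Phi (rho r) (O2 s')" by (rule Good_jump[OF g2 s'r gap])
    ultimately show "O1 s = O2 s" using e1 IH by simp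
  qed
qed

lemma Good_unique:
  assumes "LF rho" "Good Phi rho x O1" "Good Phi rho x O2"
  shows "O1 = O2"
  using Good_unique_aux[OF assms] by blast



lemma rep_sm: "represents rho a t \<Longrightarrow> strict_mono t"
  by (simp add: represents_def Seq_def)
lemma rep_unb: "represents rho a t \<Longrightarrow> \<exists>k. M < t k"
  by (simp add: represents_def Seq_def)
lemma rep_val: "represents rho a t \<Longrightarrow> rho (t k) = a k"
  by (simp add: represents_def)
lemma rep_zero: "represents rho a t \<Longrightarrow> s \<notin> range t \<Longrightarrow> rho s = Z0"
  by (simp add: represents_def)
lemma rep_prog: "represents rho a t \<Longrightarrow> infinite {k. a k i}"
  by (simp add: represents_def progressive_def)

lemma rep_fin: assumes "represents rho a t" shows "finite {k. t k \<le> s}"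
proof -
  obtain K where K: "s < t K" using rep_unb[OF assms] by blast
  have "{k. t k \<le> s} \<subseteq> {..<K}"
  proof
    fix k assume "k \<in> {k. t k \<le> s}"
    hence "t k < t K" using K by simp
    thus "k \<in> {..<K}" using strict_mono_less[OF rep_sm[OF assms]] by simp
  qed
  thus ?thesis using finite_subset by blast
qed

lemma rep_LF: assumes "represents rho a t" shows "LF rho"
  unfolding LF_def
proof
  fix s
  have "{q. rho q \<noteq> Z0 \<and> q \<le> s} \<subseteq> t ` {k. t k \<le> s}"
  proof
    fix q assume q: "q \<in> {q. rho q \<noteq> Z0 \<and> q \<le> s}"
    hence "q \<in> range t" using rep_zero[OF assms, of q] by auto
    then obtain k where "q = t k" by auto
    thus "q \<in> t ` {k. t k \<le> s}" using q by auto
  qed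
  thus "finite {q. rho q \<noteq> Z0 \<and> q \<le> s}" using rep_fin[OF assms] finite_subset by blast
qed

lemma rep_the: assumes "represents rho a t" "t k \<le> s" "s < t (Suc k)"
  shows "(THE k. t k \<le> s \<and> s < t (Suc k)) = k"
proof (rule the_equality)
  show "t k \<le> s \<and> s < t (Suc k)" using assms by simp
  fix j assume j: "t j \<le> s \<and> s < t (Suc j)"
  have sm: "strict_mono t" using rep_sm[OF assms(1)] .
  show "j = k"
  proof (rule ccontr)
    assume "j \<noteq> k"
    then consider "j < k" | "k < j" by linarith
    thus False
    proof cases
      case 1 hence "t (Suc j) \<le> t k" using strict_mono_less_eq[OF sm] by simp
      thus False using j assms by simp
    next
      case 2 hence "t (Suc k) \<le> t j" using strict_mono_less_eq[OF sm] by simp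
      thus False using j assms by simp
    qed
  qed
qed

lemma orbit_L1: "s < t 0 \<Longrightarrow> orbit_at Phi a t mu s = mu"
  by (simp add: orbit_at_def)

lemma orbit_L2: assumes "represents rho a t" "t k \<le> s" "s < t (Suc k)"
  shows "orbit_at Phi a t mu s = Phi_comp Phi a k mu"
proof -
  have "t 0 \<le> t k" using strict_mono_less_eq[OF rep_sm[OF assms(1)]] by simp
  thus ?thesis using assms rep_the[OF assms] by (simp add: orbit_at_def)
qed

lemma orbit_tk: "represents rho a t \<Longrightarrow> orbit_at Phi a t mu (t k) = Phi_comp Phi a k mu"
proof -
  assume rep: "represents rho a t"
  have "t k < t (Suc k)" using strict_mono_less[OF rep_sm[OF rep]] by simp
  thus ?thesis using orbit_L2[OF rep, of k "t k"] by simp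
qed

lemma rep_idx: assumes "represents rho a t" "t 0 \<le> s"
  shows "\<exists>k. t k \<le> s \<and> s < t (Suc k)"
proof -
  define k where "k = Max {k. t k \<le> s}"
  have fin: "finite {k. t k \<le> s}" using rep_fin[OF assms(1)] .
  have ne: "{k. t k \<le> s} \<noteq> {}" using assms(2) by blast
  have "k \<in> {k. t k \<le> s}" unfolding k_def by (rule Max_in[OF fin ne])
  moreover have "\<not> t (Suc k) \<le> s"
  proof
    assume "t (Suc k) \<le> s"
    hence "Suc k \<le> k" using fin k_def by simp
    thus False by simp
  qed
  ultimately show ?thesis by auto
qed

lemma comp_zeros: "(\<And>m. m \<le> k \<Longrightarrow> a m = Z0) \<Longrightarrow> Phi_comp Phi a k mu = mu"
  by (induction k) auto

lemma comp_zeros2: "j \<le> k \<Longrightarrow> (\<And>m. j < m \<Longrightarrow> m \<le> k \<Longrightarrow> a m = Z0) \<Longrightarrow> Phi_comp Phi a k mu = Phi_comp Phi a j mu"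
proof (induction k)
  case 0 thus ?case by simp
next
  case (Suc k)
  show ?case
  proof (cases "j = Suc k")
    case True thus ?thesis by simp
  next
    case False
    hence jk: "j \<le> k" using Suc.prems(1) by simp
    have a0: "a (Suc k) = Z0" using Suc.prems(2)[of "Suc k"] jk by simp
    have ih: "Phi_comp Phi a k mu = Phi_comp Phi a j mu"
      using Suc.IH[OF jk] Suc.prems(2) by simp
    show ?thesis using a0 ih by simp
  qed
qed

lemma orbit_Good: assumes rep: "represents rho a t"
  shows "Good Phi rho mu (orbit_at Phi a t mu)"
proof -
  have sm: "strict_mono t" using rep_sm[OF rep] .
  let ?O = "orbit_at Phi a t mu"
  have const: "?O s1 = ?O s2" if le: "s1 \<le> s2" and z: "\<And>q. s1<q \<Longrightarrow> q\<le>s2 \<Longrightarrow> rho q = Z0" for s1 s2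
  proof (cases "s2 < t 0")
    case True thus ?thesis using le orbit_L1[of s1 t Phi a mu] orbit_L1[of s2 t Phi a mu] by simp
  next
    case False
    then obtain k where k: "t k \<le> s2" "s2 < t (Suc k)" using rep_idx[OF rep] by (meson not_less)
    have zk: "a m = Z0" if "m \<le> k" "s1 < t m" for m
      using z[of "t m"] that rep_val[OF rep] strict_mono_less_eq[OF sm, of m k] k by auto
    show ?thesis
    proof (cases "s1 < t 0")
      case True
      have "Phi_comp Phi a k mu = mu"
      proof (rule comp_zeros)
        fix m assume "m \<le> k"
        moreover have "t 0 \<le> t m" using strict_mono_less_eq[OF sm] by simp
        ultimately show "a m = Z0" using zk True by simp
      qed
      thus ?thesis using True orbit_L1 orbit_L2[OF rep k] by simp
    next
      case False
      then obtain j where j: "t j \<le> s1" "s1 < t (Suc j)" using rep_idx[OF rep] by (meson not_less)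
      have jk: "j \<le> k"
      proof (rule ccontr)
        assume "\<not> j \<le> k" hence "Suc k \<le> j" by simp
        hence "t (Suc k) \<le> t j" using strict_mono_less_eq[OF sm] by simp
        thus False using j k le by simp
      qed
      have "Phi_comp Phi a k mu = Phi_comp Phi a j mu"
      proof (rule comp_zeros2[OF jk])
        fix m assume "j < m" "m \<le> k"
        hence "t (Suc j) \<le> t m" using strict_mono_less_eq[OF sm] by simp
        thus "a m = Z0" using zk[of m] \<open>m \<le> k\<close> j by simp
      qed
      thus ?thesis using orbit_L2[OF rep k] orbit_L2[OF rep j] by simp
    qed
  qed
  have jump: "?O r = Phi_nu Phi (rho r) (?O s)" if sr: "s < r" and z: "\<And>q. s<q \<Longrightarrow> q<r \<Longrightarrow> rho q = Z0" for s r
  proof (cases "r \<in> range t")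
    case False
    hence "rho r = Z0" using rep_zero[OF rep] by simp
    moreover have "?O s = ?O r"
    proof (rule const)
      show "s \<le> r" using sr by simp
      fix q assume "s < q" "q \<le> r"
      thus "rho q = Z0" using z \<open>rho r = Z0\<close> by (cases "q = r") auto
    qed
    ultimately show ?thesis by simp
  next
    case True
    then obtain k where rk: "r = t k" by auto
    have Or: "?O r = Phi_comp Phi a k mu" using orbit_tk[OF rep] rk by simp
    have rr: "rho r = a k" using rep_val[OF rep] rk by simp
    show ?thesis
    proof (cases k)
      case 0
      thus ?thesis using Or rr orbit_L1[of s t Phi a mu] sr rk by simp
    next
      case (Suc j)
      have tj: "t j < t k" using Suc strict_mono_less[OF rep_sm[OF rep]] by simp
      have "?O s = Phi_comp Phi a j mu"
      proof (cases "t j \<le> s")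
        case True thus ?thesis using orbit_L2[OF rep True] sr rk Suc by simp
      next
        case False
        have "?O s = ?O (t j)"
          by (rule const) (use False tj rk z in auto)
        thus ?thesis using orbit_tk[OF rep] by simp
      qed
      thus ?thesis using Or rr Suc by simp
    qed
  qed
  have init: "\<forall>s<t 0. ?O s = mu" using orbit_L1[of _ t Phi a mu] by blast
  show ?thesis unfolding Good_def
  proof (intro conjI)
    show "\<exists>T. \<forall>s<T. ?O s = mu" using init by blast
    show "\<forall>s1 s2. s1 \<le> s2 \<longrightarrow> (\<forall>q. s1 < q \<and> q \<le> s2 \<longrightarrow> rho q = Z0) \<longrightarrow> ?O s1 = ?O s2"
      using const by blast
    show "\<forall>s r. s < r \<longrightarrow> (\<forall>q. s < q \<and> q < r \<longrightarrow> rho q = Z0) \<longrightarrow> ?O r = Phi_nu Phi (rho r) (?O s)"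
      using jump by blast
  qed
qed

lemma Pn_rep: "rho \<in> P_n \<Longrightarrow> \<exists>a t. represents rho a t"
  by (simp add: P_n_def)

lemma Phi_rho_rep: assumes rep: "represents rho a t"
  shows "Phi_rho Phi rho mu = orbit_at Phi a t mu"
proof -
  define r where "r = (SOME r. represents rho (fst r) (snd r))"
  have "represents rho (fst r) (snd r)" unfolding r_def
    by (rule someI[of _ "(a,t)"]) (simp add: rep)
  hence "Good Phi rho mu (orbit_at Phi (fst r) (snd r) mu)" by (rule orbit_Good)
  moreover have "Good Phi rho mu (orbit_at Phi a t mu)" by (rule orbit_Good[OF rep])
  ultimately have "orbit_at Phi (fst r) (snd r) mu = orbit_at Phi a t mu"
    using Good_unique rep_LF[OF rep] by blast
  thus ?thesis unfolding Phi_rho_def r_def[symmetric] by (simp add: fun_eq_iff)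
qed

lemma Pn_LF: "rho \<in> P_n \<Longrightarrow> LF rho"
  using Pn_rep rep_LF by blast

lemma Pn_Good: "rho \<in> P_n \<Longrightarrow> Good Phi rho x (Phi_rho Phi rho x)"
proof -
  assume "rho \<in> P_n"
  then obtain a t where rep: "represents rho a t" using Pn_rep by blast
  show ?thesis unfolding Phi_rho_rep[OF rep] by (rule orbit_Good[OF rep])
qed

lemma Pn_Good_eq: "rho \<in> P_n \<Longrightarrow> Good Phi rho x Ob \<Longrightarrow> Phi_rho Phi rho x = Ob"
proof -
  assume a: "rho \<in> P_n" "Good Phi rho x Ob"
  show ?thesis by (rule Good_unique[OF Pn_LF[OF a(1)] Pn_Good[OF a(1)] a(2)])
qed



definition spl :: "(real \<Rightarrow> 'n \<Rightarrow> bool) \<Rightarrow> real \<Rightarrow> real \<Rightarrow> (real \<Rightarrow> 'n \<Rightarrow> bool) \<Rightarrow> real \<Rightarrow> 'n \<Rightarrow> bool" where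
  "spl rho1 c1 c2 rho2 = (\<lambda>q. if q \<le> c1 then rho1 q else if q \<le> c2 then Z0 else rho2 q)"

lemma least_bound:
  fixes c :: real
  assumes rep: "represents rho a t"
  defines "K \<equiv> LEAST k. c < t k"
  shows "c < t K" and "\<And>k. t k \<le> c \<longleftrightarrow> k < K"
proof -
  have ex: "\<exists>k. c < t k" using rep_unb[OF rep] .
  show cK: "c < t K" unfolding K_def using LeastI_ex[OF ex] .
  fix k
  show "t k \<le> c \<longleftrightarrow> k < K"
  proof
    assume "t k \<le> c"
    show "k < K"
    proof (rule ccontr)
      assume "\<not> k < K"
      hence "t K \<le> t k" using strict_mono_less_eq[OF rep_sm[OF rep]] by simp
      thus False using cK \<open>t k \<le> c\<close> by simp
    qed
  next
    assume "k < K"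
    thus "t k \<le> c" unfolding K_def using not_less_Least by fastforce
  qed
qed

lemma splice_Pn:
  assumes p1: "rho1 \<in> P_n" and p2: "rho2 \<in> P_n" and c: "c1 \<le> c2"
  shows "spl rho1 c1 c2 rho2 \<in> P_n"
proof -
  obtain a1 t1 where r1: "represents rho1 a1 t1" using Pn_rep[OF p1] by blast
  obtain a2 t2 where r2: "represents rho2 a2 t2" using Pn_rep[OF p2] by blast
  define K1 where "K1 = (LEAST k. c1 < t1 k)"
  define K2 where "K2 = (LEAST k. c2 < t2 k)"
  note b1 = least_bound[OF r1, where c=c1, folded K1_def]
  note b2 = least_bound[OF r2, where c=c2, folded K2_def]
  have sm1: "strict_mono t1" using rep_sm[OF r1] .
  have sm2: "strict_mono t2" using rep_sm[OF r2] .
  define t where "t = (\<lambda>k. if k < K1 then t1 k else t2 (k - K1 + K2))"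
  define a where "a = (\<lambda>k. if k < K1 then a1 k else a2 (k - K1 + K2))"
  let ?r = "spl rho1 c1 c2 rho2"
  have smt: "strict_mono t" unfolding strict_mono_Suc_iff
  proof
    fix k
    consider "Suc k < K1" | "Suc k = K1" | "K1 \<le> k" by linarith
    thus "t k < t (Suc k)"
    proof cases
      case 1 thus ?thesis using t_def strict_mono_less[OF sm1] by simp
    next
      case 2
      have "t1 k \<le> c1" using b1(2)[of k] 2 by simp
      moreover have "c2 < t2 K2" using b2(1) .
      ultimately show ?thesis using 2 t_def c by simp
    next
      case 3
      have "Suc k - K1 + K2 = Suc (k - K1 + K2)" using 3 by simp
      thus ?thesis using 3 t_def strict_mono_less[OF sm2] by simp
    qed
  qed
  have unb: "\<forall>M. \<exists>k. M < t k"
  proof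
    fix M
    obtain k where "M < t2 k" using rep_unb[OF r2] by blast
    moreover have "t2 k \<le> t2 (k + K2)" using strict_mono_less_eq[OF sm2] by simp
    moreover have "t (k + K1) = t2 (k + K2)" using t_def by simp
    ultimately show "\<exists>k. M < t k" by (metis order_less_le_trans)
  qed
  have prog: "progressive a" unfolding progressive_def
  proof
    fix i
    have inf2: "infinite {j. a2 j i}" using rep_prog[OF r2] .
    show "infinite {k. a k i}" unfolding infinite_nat_iff_unbounded_le
    proof
      fix m
      obtain j where j: "j \<ge> m + K2" "a2 j i" using inf2 unfolding infinite_nat_iff_unbounded_le by blast
      define k where "k = j - K2 + K1"
      have "k \<ge> m" "\<not> k < K1" "k - K1 + K2 = j" using j k_def by auto
      hence "k \<ge> m \<and> a k i" using a_def j by simp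
      thus "\<exists>k\<ge>m. k \<in> {k. a k i}" by blast
    qed
  qed
  have val: "?r (t k) = a k" for k
  proof (cases "k < K1")
    case True
    hence "t1 k \<le> c1" using b1(2) by simp
    thus ?thesis using True t_def a_def rep_val[OF r1] by (simp add: spl_def)
  next
    case False
    define j where "j = k - K1 + K2"
    have "K2 \<le> j" using j_def by simp
    hence "\<not> t2 j \<le> c2" using b2(2)[of j] by simp
    thus ?thesis using False t_def a_def rep_val[OF r2] c j_def by (simp add: spl_def)
  qed
  have zer: "?r s = Z0" if ns: "s \<notin> range t" for s
  proof -
    consider "s \<le> c1" | "c1 < s \<and> s \<le> c2" | "c2 < s" by linarith
    thus ?thesis
    proof cases
      case 1
      have "s \<notin> range t1"
      proof
        assume "s \<in> range t1"
        then obtain k where k: "s = t1 k" by auto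
        hence "k < K1" using b1(2) 1 by simp
        hence "s = t k" using k t_def by simp
        thus False using ns by simp
      qed
      thus ?thesis using 1 rep_zero[OF r1] by (simp add: spl_def)
    next
      case 2 thus ?thesis by (simp add: spl_def)
    next
      case 3
      have "s \<notin> range t2"
      proof
        assume "s \<in> range t2"
        then obtain j where jj: "s = t2 j" by auto
        hence "\<not> j < K2" using b2(2)[of j] 3 by simp
        hence "\<not> j - K2 + K1 < K1" "j - K2 + K1 - K1 + K2 = j" by auto
        hence "s = t (j - K2 + K1)" using jj t_def by simp
        thus False using ns by simp
      qed
      thus ?thesis using 3 c rep_zero[OF r2] by (simp add: spl_def)
    qed
  qed
  have "represents ?r a t" unfolding represents_def Seq_def
    using prog smt unb val zer by simp
  thus ?thesis unfolding P_n_def by blast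
qed

lemma splice_orbit:
  assumes p1: "rho1 \<in> P_n" and p2: "rho2 \<in> P_n" and c: "c1 \<le> c2"
    and w: "Phi_rho Phi rho1 x1 c1 = Phi_rho Phi rho2 x2 c2"
    and q: "c2 < q"
  shows "Phi_rho Phi (spl rho1 c1 c2 rho2) x1 q = Phi_rho Phi rho2 x2 q"
proof -
  let ?r = "spl rho1 c1 c2 rho2"
  define O1 where "O1 = Phi_rho Phi rho1 x1"
  define O2 where "O2 = Phi_rho Phi rho2 x2"
  have g1: "Good Phi rho1 x1 O1" using Pn_Good[OF p1] O1_def by simp
  have g2: "Good Phi rho2 x2 O2" using Pn_Good[OF p2] O2_def by simp
  have wc: "O1 c1 = O2 c2" using w O1_def O2_def by simp
  define Oc where "Oc = (\<lambda>s. if s \<le> c2 then O1 (min s c1) else O2 s)"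
  have LC: "O1 (min s1 c1) = O1 (min s2 c1)"
    if "s1 \<le> s2" "s2 \<le> c2" "\<And>q. s1<q \<Longrightarrow> q\<le>s2 \<Longrightarrow> ?r q = Z0" for s1 s2
  proof (rule Good_const[OF g1])
    show "min s1 c1 \<le> min s2 c1" using that(1) by simp
    fix q assume "min s1 c1 < q" "q \<le> min s2 c1"
    hence "s1 < q" "q \<le> s2" "q \<le> c1" by auto
    thus "rho1 q = Z0" using that(3)[of q] by (simp add: spl_def)
  qed
  have RC: "O2 s1 = O2 s2"
    if "c2 \<le> s1" "s1 \<le> s2" "\<And>q. s1<q \<Longrightarrow> q\<le>s2 \<Longrightarrow> ?r q = Z0" for s1 s2
  proof (rule Good_const[OF g2])
    show "s1 \<le> s2" using that(2) .
    fix q assume "s1 < q" "q \<le> s2"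
    thus "rho2 q = Z0" using that(1) that(3)[of q] c by (simp add: spl_def)
  qed
  have const: "Oc s1 = Oc s2"
    if le: "s1 \<le> s2" and z: "\<And>q. s1<q \<Longrightarrow> q\<le>s2 \<Longrightarrow> ?r q = Z0" for s1 s2
  proof -
    consider "s2 \<le> c2" | "c2 < s1" | "s1 \<le> c2" "c2 < s2" by linarith
    thus ?thesis
    proof cases
      case 1 thus ?thesis using LC[OF le 1 z] le Oc_def by simp
    next
      case 2 thus ?thesis using RC[of s1 s2] le z Oc_def by simp
    next
      case 3
      have "O1 (min s1 c1) = O1 (min c2 c1)" by (rule LC) (use 3 z in auto)
      moreover have "O2 c2 = O2 s2" by (rule RC) (use 3 z in auto)
      ultimately show ?thesis using 3 Oc_def wc c by simp
    qed
  qed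
  have jump: "Oc r = Phi_nu Phi (?r r) (Oc s)"
    if sr: "s < r" and z: "\<And>q. s<q \<Longrightarrow> q<r \<Longrightarrow> ?r q = Z0" for s r
  proof -
    consider "r \<le> c1" | "c1 < r" "r \<le> c2" | "c2 < r" by linarith
    thus ?thesis
    proof cases
      case 1
      have "O1 r = Phi_nu Phi (rho1 r) (O1 s)"
      proof (rule Good_jump[OF g1 sr])
        fix q assume "s < q" "q < r"
        thus "rho1 q = Z0" using z[of q] 1 by (simp add: spl_def)
      qed
      thus ?thesis using 1 sr c Oc_def by (simp add: spl_def)
    next
      case 2
      have rz: "?r r = Z0" using 2 by (simp add: spl_def)
      have "O1 (min s c1) = O1 (min r c1)"
      proof (rule LC)
        show "s \<le> r" using sr by simp
        show "r \<le> c2" using 2 by simp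
        fix q assume "s < q" "q \<le> r"
        thus "?r q = Z0" using z rz by (cases "q = r") auto
      qed
      thus ?thesis using 2 sr rz Oc_def by simp
    next
      case 3
      have rr: "?r r = rho2 r" using 3 c by (simp add: spl_def)
      show ?thesis
      proof (cases "c2 \<le> s")
        case True
        have Os: "Oc s = O2 s" using True Oc_def wc c by (cases "s = c2") (auto simp: min_def)
        have "O2 r = Phi_nu Phi (rho2 r) (O2 s)"
        proof (rule Good_jump[OF g2 sr])
          fix q assume "s < q" "q < r"
          thus "rho2 q = Z0" using z[of q] True c by (simp add: spl_def)
        qed
        thus ?thesis using Os rr 3 Oc_def by simp
      next
        case False
        have "O1 (min s c1) = O1 (min c2 c1)" by (rule LC) (use False 3 z in auto)
        hence Os: "Oc s = O2 c2" using False Oc_def wc c by simp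
        have "O2 r = Phi_nu Phi (rho2 r) (O2 c2)"
        proof (rule Good_jump[OF g2])
          show "c2 < r" using 3 .
          fix q assume "c2 < q" "q < r"
          thus "rho2 q = Z0" using z[of q] False c by (simp add: spl_def)
        qed
        thus ?thesis using Os rr 3 Oc_def by simp
      qed
    qed
  qed
  obtain T1 where T1: "\<forall>s<T1. O1 s = x1" using Good_init[OF g1] by blast
  have init: "\<forall>s< min T1 c1. Oc s = x1" using T1 Oc_def c by simp
  have "Good Phi ?r x1 Oc" unfolding Good_def
  proof (intro conjI)
    show "\<exists>T. \<forall>s<T. Oc s = x1" using init by blast
    show "\<forall>s1 s2. s1 \<le> s2 \<longrightarrow> (\<forall>q. s1 < q \<and> q \<le> s2 \<longrightarrow> ?r q = Z0) \<longrightarrow> Oc s1 = Oc s2"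
      using const by blast
    show "\<forall>s r. s < r \<longrightarrow> (\<forall>q. s < q \<and> q < r \<longrightarrow> ?r q = Z0) \<longrightarrow> Oc r = Phi_nu Phi (?r r) (Oc s)"
      using jump by blast
  qed
  hence "Phi_rho Phi ?r x1 = Oc" using Pn_Good_eq splice_Pn[OF p1 p2 c] by blast
  thus ?thesis using q Oc_def O2_def by simp
qed

definition shft :: "real \<Rightarrow> (real \<Rightarrow> 'n \<Rightarrow> bool) \<Rightarrow> real \<Rightarrow> 'n \<Rightarrow> bool" where
  "shft d rho = (\<lambda>q. rho (q - d))"

lemma shift_Pn: assumes p: "rho \<in> P_n" shows "shft d rho \<in> P_n"
proof -
  obtain a t where r: "represents rho a t" using Pn_rep[OF p] by blast
  have "represents (shft d rho) a (\<lambda>k. t k + d)"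
    unfolding represents_def
  proof (intro conjI allI impI)
    show "progressive a" using r represents_def by blast
    have "strict_mono (\<lambda>k. t k + d)" using rep_sm[OF r] by (simp add: strict_mono_def)
    moreover have "\<forall>M. \<exists>k. M < t k + d"
    proof
      fix M obtain k where "M - d < t k" using rep_unb[OF r] by blast
      thus "\<exists>k. M < t k + d" by (intro exI[of _ k]) simp
    qed
    ultimately show "(\<lambda>k. t k + d) \<in> Seq" unfolding Seq_def by simp
    fix k show "shft d rho (t k + d) = a k" using rep_val[OF r] by (simp add: shft_def)
  next
    fix s assume "s \<notin> range (\<lambda>k. t k + d)"
    have "s - d \<notin> range t"
    proof
      assume "s - d \<in> range t"
      then obtain k where "s - d = t k" by auto
      hence "s = t k + d" by simp
      hence "s \<in> range (\<lambda>k. t k + d)" by (metis rangeI)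
      thus False using \<open>s \<notin> range (\<lambda>k. t k + d)\<close> by blast
    qed
    thus "shft d rho s = Z0" using rep_zero[OF r] by (simp add: shft_def)
  qed
  thus ?thesis unfolding P_n_def by blast
qed

lemma shift_orbit: assumes p: "rho \<in> P_n"
  shows "Phi_rho Phi (shft d rho) x q = Phi_rho Phi rho x (q - d)"
proof -
  define Ob where "Ob = Phi_rho Phi rho x"
  have g: "Good Phi rho x Ob" using Pn_Good[OF p] Ob_def by simp
  let ?O = "\<lambda>q. Ob (q - d)"
  obtain T where T: "\<forall>s<T. Ob s = x" using Good_init[OF g] by blast
  have "Good Phi (shft d rho) x ?O" unfolding Good_def
  proof (intro conjI allI impI)
    show "\<exists>T. \<forall>s<T. Ob (s - d) = x" using T by (intro exI[of _ "T + d"]) simp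
  next
    fix s1 s2 :: real assume "s1 \<le> s2" "\<forall>q. s1 < q \<and> q \<le> s2 \<longrightarrow> shft d rho q = Z0"
    note h = this
    show "Ob (s1 - d) = Ob (s2 - d)"
    proof (rule Good_const[OF g])
      show "s1 - d \<le> s2 - d" using h by simp
      fix q assume "s1 - d < q" "q \<le> s2 - d"
      hence "s1 < q + d" "q + d \<le> s2" by auto
      hence "shft d rho (q + d) = Z0" using h by blast
      thus "rho q = Z0" by (simp add: shft_def)
    qed
  next
    fix s r :: real assume "s < r" "\<forall>q. s < q \<and> q < r \<longrightarrow> shft d rho q = Z0"
    note h = this
    have "Ob (r - d) = Phi_nu Phi (rho (r - d)) (Ob (s - d))"
    proof (rule Good_jump[OF g])
      show "s - d < r - d" using h by simp
      fix q assume "s - d < q" "q < r - d"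
      hence "s < q + d" "q + d < r" by auto
      hence "shft d rho (q + d) = Z0" using h by blast
      thus "rho q = Z0" by (simp add: shft_def)
    qed
    thus "Ob (r - d) = Phi_nu Phi (shft d rho r) (Ob (s - d))" by (simp add: shft_def)
  qed
  hence "Phi_rho Phi (shft d rho) x = ?O" using Pn_Good_eq shift_Pn[OF p] by blast
  thus ?thesis using Ob_def by simp
qed



definition omg :: "(real \<Rightarrow> 'a) \<Rightarrow> 'a set" where
  "omg f = {v. \<exists>s\<in>Seq. \<forall>\<^sub>F k in sequentially. f (s k) = v}"

lemma omega_omg: "omega_rho Phi rho mu = omg (Phi_rho Phi rho mu)"
  by (simp add: omega_rho_def omg_def)

lemma omg_iff: "v \<in> omg f \<longleftrightarrow> (\<forall>T. \<exists>q\<ge>T. f q = v)"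
proof
  assume "v \<in> omg f"
  then obtain s where s: "s \<in> Seq" "\<forall>\<^sub>F k in sequentially. f (s k) = v" unfolding omg_def by blast
  then obtain K where K: "\<And>k. k \<ge> K \<Longrightarrow> f (s k) = v" unfolding eventually_sequentially by blast
  have sm: "strict_mono s" using s(1) by (simp add: Seq_def)
  show "\<forall>T. \<exists>q\<ge>T. f q = v"
  proof
    fix T
    obtain k where k: "T < s k" using s(1) unfolding Seq_def by blast
    have "s k \<le> s (max k K)" using strict_mono_less_eq[OF sm] by simp
    moreover have "f (s (max k K)) = v" using K by simp
    ultimately show "\<exists>q\<ge>T. f q = v" using k by (intro exI[of _ "s (max k K)"]) simp
  qed
next
  assume h: "\<forall>T. \<exists>q\<ge>T. f q = v"
  define nx where "nx = (\<lambda>p. SOME q. q \<ge> p + 1 \<and> f q = v)"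
  have nx: "nx p \<ge> p + 1 \<and> f (nx p) = v" for p
  proof -
    have "\<exists>q. q \<ge> p + 1 \<and> f q = v" using h by blast
    thus ?thesis unfolding nx_def by (rule someI_ex)
  qed
  define s where "s = rec_nat (nx 0) (\<lambda>k p. nx p)"
  have s0: "s 0 = nx 0" and sS: "s (Suc k) = nx (s k)" for k by (simp_all add: s_def)
  have fs: "f (s k) = v" for k
  proof (cases k)
    case 0 thus ?thesis using nx s0 by simp
  next
    case (Suc j) thus ?thesis using nx[of "s j"] sS[of j] by simp
  qed
  have inc: "s (Suc k) \<ge> s k + 1" for k using nx sS by simp
  have "s k < s (Suc k)" for k using inc[of k] by simp
  hence sm: "strict_mono s" unfolding strict_mono_Suc_iff by blast
  have lb: "s k \<ge> s 0 + real k" for k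
  proof (induction k)
    case 0 thus ?case by simp
  next
    case (Suc k) thus ?case using inc[of k] by simp
  qed
  have "\<forall>M. \<exists>k. M < s k"
  proof
    fix M
    obtain n :: nat where "M - s 0 < real n" using reals_Archimedean2 by blast
    thus "\<exists>k. M < s k" using lb[of n] by (intro exI[of _ n]) simp
  qed
  hence "s \<in> Seq" using sm by (simp add: Seq_def)
  moreover have "\<forall>\<^sub>F k in sequentially. f (s k) = v" using fs by simp
  ultimately show "v \<in> omg f" unfolding omg_def by blast
qed

lemma ev_omg:
  fixes f :: "real \<Rightarrow> 'a::finite"
  shows "\<exists>T. \<forall>q\<ge>T. f q \<in> omg f"
proof -
  have "\<forall>v. \<exists>T. v \<notin> omg f \<longrightarrow> (\<forall>q\<ge>T. f q \<noteq> v)"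
  proof
    fix v
    show "\<exists>T. v \<notin> omg f \<longrightarrow> (\<forall>q\<ge>T. f q \<noteq> v)"
    proof (cases "v \<in> omg f")
      case True thus ?thesis by simp
    next
      case False
      hence "\<not> (\<forall>T. \<exists>q\<ge>T. f q = v)" using omg_iff by metis
      then obtain T where "\<forall>q\<ge>T. f q \<noteq> v" by blast
      thus ?thesis by blast
    qed
  qed
  hence "\<exists>g. \<forall>v. v \<notin> omg f \<longrightarrow> (\<forall>q\<ge>g v. f q \<noteq> v)" by (rule choice)
  then obtain g where g: "\<And>v. v \<notin> omg f \<Longrightarrow> \<forall>q\<ge>g v. f q \<noteq> v" by blast
  define T where "T = Max (g ` UNIV)"
  have "\<forall>q\<ge>T. f q \<in> omg f"
  proof (intro allI impI)
    fix q assume "q \<ge> T"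
    moreover have "g (f q) \<le> T" unfolding T_def by simp
    ultimately have "q \<ge> g (f q)" by simp
    thus "f q \<in> omg f" using g[of "f q"] by blast
  qed
  thus ?thesis by blast
qed

lemma omg_ne:
  fixes f :: "real \<Rightarrow> 'a::finite"
  shows "omg f \<noteq> {}"
proof -
  obtain T where "\<forall>q\<ge>T. f q \<in> omg f" using ev_omg[of f] by blast
  hence "f T \<in> omg f" by simp
  thus ?thesis by blast
qed

lemma omg_tail:
  assumes "\<forall>q\<ge>T. f q = g q" shows "omg f = omg g"
proof -
  have "(\<forall>T. \<exists>q\<ge>T. f q = v) \<longleftrightarrow> (\<forall>T. \<exists>q\<ge>T. g q = v)" for v
  proof
    assume h: "\<forall>T. \<exists>q\<ge>T. f q = v"
    show "\<forall>T'. \<exists>q\<ge>T'. g q = v"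
    proof
      fix T' obtain q where "q \<ge> max T T'" "f q = v" using h by blast
      thus "\<exists>q\<ge>T'. g q = v" using assms by (intro exI[of _ q]) auto
    qed
  next
    assume h: "\<forall>T. \<exists>q\<ge>T. g q = v"
    show "\<forall>T'. \<exists>q\<ge>T'. f q = v"
    proof
      fix T' obtain q where "q \<ge> max T T'" "g q = v" using h by blast
      thus "\<exists>q\<ge>T'. f q = v" using assms by (intro exI[of _ q]) auto
    qed
  qed
  note eqv = this
  show ?thesis
  proof (rule set_eqI)
    fix v show "v \<in> omg f \<longleftrightarrow> v \<in> omg g" unfolding omg_iff using eqv[of v] .
  qed
qed



lemma fixed_point:
  fixes Phi :: "('n::finite \<Rightarrow> bool) \<Rightarrow> ('n \<Rightarrow> bool)"
  assumes rP: "rho \<in> P_n" and ev: "\<forall>q\<ge>T. Phi_rho Phi rho mu q = w"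
  shows "Phi w = w"
proof
  fix i
  obtain a t where rep: "represents rho a t" using Pn_rep[OF rP] by blast
  have Oeq: "Phi_rho Phi rho mu = orbit_at Phi a t mu" by (rule Phi_rho_rep[OF rep])
  have sm: "strict_mono t" using rep_sm[OF rep] .
  obtain K where K: "T < t K" using rep_unb[OF rep] by blast
  obtain k where k: "k > K" "a k i" using rep_prog[OF rep, of i] unfolding infinite_nat_iff_unbounded by blast
  obtain j where kj: "k = Suc j" using k(1) by (cases k) auto
  have jK: "K \<le> j" using kj k(1) by simp
  have tj: "T < t j" using K strict_mono_less_eq[OF sm, of K j] jK by simp
  have tk: "T < t k" using tj strict_mono_less[OF sm, of j k] kj by simp
  have "orbit_at Phi a t mu (t k) = Phi_nu Phi (a k) (orbit_at Phi a t mu (t j))"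
    using orbit_tk[OF rep, of Phi mu k] orbit_tk[OF rep, of Phi mu j] kj by simp
  hence "w = Phi_nu Phi (a k) w" using ev Oeq tj tk by simp
  hence "w i = Phi w i" using k(2) unfolding Phi_nu_def by (metis (full_types))
  thus "Phi w i = w i" by simp
qed

lemma fixed_orbit:
  fixes Phi :: "('n::finite \<Rightarrow> bool) \<Rightarrow> ('n \<Rightarrow> bool)"
  assumes rP: "rho \<in> P_n" and fp: "Phi w = w"
  shows "Phi_rho Phi rho w = (\<lambda>_. w)"
proof (rule Pn_Good_eq[OF rP])
  have nu: "Phi_nu Phi a w = w" for a using fp unfolding Phi_nu_def by auto
  show "Good Phi rho w (\<lambda>_. w)" unfolding Good_def using nu by simp
qed

lemma low_card1:
  fixes Phi :: "('n::finite \<Rightarrow> bool) \<Rightarrow> ('n \<Rightarrow> bool)"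
  assumes rP: "rho \<in> P_n" and x: "x \<in> W_low_orb Phi rho mu"
  shows "card (omg (Phi_rho Phi rho mu)) = 1"
proof (rule ccontr)
  assume nc: "card (omg (Phi_rho Phi rho mu)) \<noteq> 1"
  define Ob where "Ob = Phi_rho Phi rho mu"
  define W where "W = omg Ob"
  have finW: "finite W" by simp
  have neW: "W \<noteq> {}" using omg_ne W_def by simp
  obtain a where aW: "a \<in> W" using neW by blast
  have "\<exists>b\<in>W. b \<noteq> a"
  proof (rule ccontr)
    assume "\<not> (\<exists>b\<in>W. b \<noteq> a)"
    hence "W = {a}" using aW by blast
    thus False using nc W_def Ob_def by simp
  qed
  then obtain b where bW: "b \<in> W" and ab: "b \<noteq> a" by blast
  have g: "Good Phi rho mu Ob" using Pn_Good[OF rP] Ob_def by simp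
  have lf: "LF rho" using Pn_LF[OF rP] .
  have xl: "\<forall>rho'\<in>P_n. \<exists>t'. \<forall>t\<ge>t'. Phi_rho Phi rho' x t = Ob t"
    using x unfolding W_low_orb_def Ob_def by blast
  obtain t1 where t1: "\<forall>t\<ge>t1. Phi_rho Phi rho x t = Ob t" using xl rP by blast
  have Pd: "\<exists>T. \<forall>q\<ge>T. Ob (q - d) = Ob q" for d
  proof -
    obtain t2 where t2: "\<forall>t\<ge>t2. Phi_rho Phi (shft d rho) x t = Ob t"
      using xl shift_Pn[OF rP, of d] by blast
    have "\<forall>q\<ge>max t2 (t1 + d). Ob (q - d) = Ob q"
    proof (intro allI impI)
      fix q assume "max t2 (t1 + d) \<le> q"
      hence "q \<ge> t2" "q - d \<ge> t1" by auto
      thus "Ob (q - d) = Ob q" using t1 t2 shift_orbit[OF rP, of Phi d x q] by simp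
    qed
    thus ?thesis by blast
  qed
  obtain T0 where T0: "\<forall>q\<ge>T0. Ob (q - 1) = Ob q" using Pd[of 1] by blast
  have per: "Ob (q + real k) = Ob q" if "q \<ge> T0 - 1" for q k
  proof (induction k)
    case 0 thus ?case by simp
  next
    case (Suc k)
    have "q + real (Suc k) \<ge> T0" using that by simp
    hence "Ob (q + real (Suc k) - 1) = Ob (q + real (Suc k))" using T0 by blast
    moreover have "q + real (Suc k) - 1 = q + real k" by simp
    ultimately show ?case using Suc.IH by simp
  qed
  obtain q1 where q1: "q1 \<ge> T0" "Ob q1 = a" using aW W_def omg_iff by metis
  obtain q2 where q2: "q2 \<ge> q1 + 1" "Ob q2 = b" using bW W_def omg_iff by metis
  have neq: "Ob q1 \<noteq> Ob q2" using q1 q2 ab by simp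
  define Y where "Y = {z. q1 < z \<and> z \<le> q2 \<and> rho z \<noteq> Z0}"
  define S where "S = {z. q1 < z \<and> z \<le> q2 \<and> rho z \<noteq> Z0 \<and> Ob z \<noteq> Ob q1}"
  have finA: "finite {q. rho q \<noteq> Z0 \<and> q \<le> q2}" using lf LF_def by blast
  have finY: "finite Y" by (rule finite_subset[OF _ finA]) (auto simp: Y_def)
  have finS: "finite S" by (rule finite_subset[OF _ finA]) (auto simp: S_def)
  have neY: "Y \<noteq> {}"
  proof
    assume "Y = {}"
    have "Ob q1 = Ob q2"
    proof (rule Good_const[OF g])
      show "q1 \<le> q2" using q2 by simp
      fix q assume "q1 < q" "q \<le> q2"
      thus "rho q = Z0" using \<open>Y = {}\<close> unfolding Y_def by blast
    qed
    thus False using neq by simp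
  qed
  define z where "z = Max Y"
  have zY: "z \<in> Y" using finY neY z_def by simp
  have "Ob z = Ob q2"
  proof (rule Good_const[OF g])
    show "z \<le> q2" using zY Y_def by simp
    fix q assume "z < q" "q \<le> q2"
    show "rho q = Z0"
    proof (rule ccontr)
      assume "rho q \<noteq> Z0"
      hence "q \<in> Y" using zY \<open>z < q\<close> \<open>q \<le> q2\<close> Y_def by simp
      hence "q \<le> z" using finY z_def by simp
      thus False using \<open>z < q\<close> by simp
    qed
  qed
  hence zS: "z \<in> S" using zY neq Y_def S_def by simp
  define r where "r = Min S"
  have rS: "r \<in> S" using finS zS r_def by (metis Min_in empty_iff)
  have before: "Ob s = Ob q1" if "q1 \<le> s" "s < r" for s
  proof -
    define Y' where "Y' = {z. q1 < z \<and> z \<le> s \<and> rho z \<noteq> Z0}"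
    have finY': "finite Y'" by (rule finite_subset[OF _ finA]) (use rS S_def that in \<open>auto simp: Y'_def\<close>)
    show ?thesis
    proof (cases "Y' = {}")
      case True
      have "Ob q1 = Ob s"
      proof (rule Good_const[OF g])
        show "q1 \<le> s" using that by simp
        fix q assume "q1 < q" "q \<le> s"
        thus "rho q = Z0" using True unfolding Y'_def by blast
      qed
      thus ?thesis by simp
    next
      case False
      define z' where "z' = Max Y'"
      have z'Y: "z' \<in> Y'" using finY' False z'_def by simp
      have e: "Ob z' = Ob s"
      proof (rule Good_const[OF g])
        show "z' \<le> s" using z'Y Y'_def by simp
        fix q assume "z' < q" "q \<le> s"
        show "rho q = Z0"
        proof (rule ccontr)
          assume "rho q \<noteq> Z0"
          hence "q \<in> Y'" using z'Y \<open>z' < q\<close> \<open>q \<le> s\<close> Y'_def by simp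
          hence "q \<le> z'" using finY' z'_def by simp
          thus False using \<open>z' < q\<close> by simp
        qed
      qed
      have "z' < r" using z'Y Y'_def that by simp
      hence "z' \<notin> S" using finS r_def Min_le by (metis not_le)
      moreover have "q1 < z' \<and> z' \<le> q2 \<and> rho z' \<noteq> Z0"
        using z'Y Y'_def that rS S_def by simp
      ultimately have "Ob z' = Ob q1" using S_def by blast
      thus ?thesis using e by simp
    qed
  qed
  define d where "d = r - q1"
  have dpos: "d > 0" using rS S_def d_def by simp
  obtain Td where Td: "\<forall>q\<ge>Td. Ob (q - d) = Ob q" using Pd[of d] by blast
  obtain n :: nat where n: "Td - r < real n" using reals_Archimedean2 by blast
  have "Ob (r + real n - d) = Ob (r + real n)" using Td n by simp
  moreover have "r + real n - d = q1 + real n" using d_def by simp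
  moreover have "Ob (q1 + real n) = Ob q1" using per[of q1 n] q1 by simp
  moreover have "Ob (r + real n) = Ob r" using per[of r n] q1 rS S_def by simp
  ultimately have "Ob r = Ob q1" by simp
  thus False using rS S_def by simp
qed



theorem theorem51:
  fixes Phi :: "('n::finite \<Rightarrow> bool) \<Rightarrow> ('n \<Rightarrow> bool)"
    and mu :: "'n \<Rightarrow> bool"
    and rho :: "real \<Rightarrow> 'n \<Rightarrow> bool"
  assumes "rho \<in> P_n"
  shows "W_up_orb Phi rho mu = W_up_omega Phi rho mu
    \<and> (Or_rho Phi rho mu \<subseteq> W_up_orb Phi rho mu \<and> W_up_orb Phi rho mu \<noteq> {})
    \<and> W_low_orb Phi rho mu \<subseteq> W_low_omega Phi rho mu
    \<and> ((W_low_orb Phi rho mu \<noteq> {} \<longleftrightarrow> card (omega_rho Phi rho mu) = 1)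
        \<and> (card (omega_rho Phi rho mu) = 1 \<longrightarrow>
              W_low_orb Phi rho mu \<noteq> {} \<and> W_low_omega Phi rho mu \<noteq> {}))
    \<and> (\<forall>mu'. omega_rho Phi rho mu = {mu'} \<longrightarrow>
           W_low_orb Phi rho mu = W_low_omega Phi rho mu \<and> W_low_omega Phi rho mu = W_low_pt Phi mu')"
proof -
  note rP = assms
  define Ob where "Ob = Phi_rho Phi rho mu"
  have Wd: "omega_rho Phi rho mu = omg Ob" using omega_omg Ob_def by simp
  have omg_gen: "omega_rho Phi rho' x = omg (Phi_rho Phi rho' x)" for rho' x by (rule omega_omg)
  have a1: "W_up_orb Phi rho mu \<subseteq> W_up_omega Phi rho mu"
  proof
    fix x assume "x \<in> W_up_orb Phi rho mu"
    then obtain rho' t' where r': "rho' \<in> P_n" "\<forall>t\<ge>t'. Phi_rho Phi rho' x t = Ob t"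
      unfolding W_up_orb_def Ob_def by blast
    have "omg (Phi_rho Phi rho' x) = omg Ob" by (rule omg_tail[OF r'(2)])
    thus "x \<in> W_up_omega Phi rho mu" unfolding W_up_omega_def using r'(1) omg_gen Wd by auto
  qed
  have a2: "W_up_omega Phi rho mu \<subseteq> W_up_orb Phi rho mu"
  proof
    fix x assume "x \<in> W_up_omega Phi rho mu"
    then obtain rho' where r': "rho' \<in> P_n" "omg (Phi_rho Phi rho' x) = omg Ob"
      unfolding W_up_omega_def using omg_gen Wd by auto
    define O1 where "O1 = Phi_rho Phi rho' x"
    obtain T1 where T1: "\<forall>q\<ge>T1. O1 q \<in> omg O1" using ev_omg[of O1] by blast
    have "O1 T1 \<in> omg Ob" using T1 r'(2) O1_def by simp
    then obtain s2 where s2: "s2 \<ge> T1" "Ob s2 = O1 T1" using omg_iff by metis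
    have "\<forall>q\<ge>s2 + 1. Phi_rho Phi (spl rho' T1 s2 rho) x q = Ob q"
      using splice_orbit[OF r'(1) rP s2(1), of Phi x mu] s2(2) O1_def Ob_def by simp
    moreover have "spl rho' T1 s2 rho \<in> P_n" using splice_Pn[OF r'(1) rP s2(1)] .
    ultimately show "x \<in> W_up_orb Phi rho mu" unfolding W_up_orb_def Ob_def by blast
  qed
  have b: "Or_rho Phi rho mu \<subseteq> W_up_orb Phi rho mu"
  proof
    fix x assume "x \<in> Or_rho Phi rho mu"
    then obtain s0 where x: "x = Ob s0" unfolding Or_rho_def Ob_def by blast
    obtain T where T: "\<forall>s<T. Phi_rho Phi rho x s = x" using Good_init[OF Pn_Good[OF rP]] by blast
    define c1 where "c1 = min (T - 1) s0"
    have c1: "c1 \<le> s0" using c1_def by simp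
    have "Phi_rho Phi rho x c1 = x" using T c1_def by simp
    hence "\<forall>q\<ge>s0 + 1. Phi_rho Phi (spl rho c1 s0 rho) x q = Ob q"
      using splice_orbit[OF rP rP c1, of Phi x mu] x Ob_def by simp
    moreover have "spl rho c1 s0 rho \<in> P_n" using splice_Pn[OF rP rP c1] .
    ultimately show "x \<in> W_up_orb Phi rho mu" unfolding W_up_orb_def Ob_def by blast
  qed
  have bne: "W_up_orb Phi rho mu \<noteq> {}"
  proof -
    have "Ob 0 \<in> Or_rho Phi rho mu" unfolding Or_rho_def Ob_def by simp
    thus ?thesis using b by blast
  qed
  have c: "W_low_orb Phi rho mu \<subseteq> W_low_omega Phi rho mu"
  proof
    fix x assume x: "x \<in> W_low_orb Phi rho mu"
    show "x \<in> W_low_omega Phi rho mu" unfolding W_low_omega_def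
    proof (intro CollectI ballI)
      fix rho' :: "real \<Rightarrow> 'n \<Rightarrow> bool" assume r': "rho' \<in> P_n"
      then obtain t' where "\<forall>t\<ge>t'. Phi_rho Phi rho' x t = Ob t"
        using x unfolding W_low_orb_def Ob_def by blast
      hence "omg (Phi_rho Phi rho' x) = omg Ob" by (rule omg_tail)
      thus "omega_rho Phi rho' x = omega_rho Phi rho mu" using omg_gen Wd by simp
    qed
  qed
  have e: "W_low_orb Phi rho mu = W_low_omega Phi rho mu \<and> W_low_omega Phi rho mu = W_low_pt Phi w"
    if Ww: "omega_rho Phi rho mu = {w}" for w
  proof -
    have e1: "W_low_omega Phi rho mu \<subseteq> W_low_pt Phi w"
      unfolding W_low_omega_def W_low_pt_def using Ww by auto
    have e2: "W_low_pt Phi w \<subseteq> W_low_orb Phi rho mu"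
    proof
      fix x assume x: "x \<in> W_low_pt Phi w"
      obtain T where T: "\<forall>q\<ge>T. Ob q \<in> omg Ob" using ev_omg[of Ob] by blast
      show "x \<in> W_low_orb Phi rho mu" unfolding W_low_orb_def
      proof (intro CollectI ballI)
        fix rho' :: "real \<Rightarrow> 'n \<Rightarrow> bool" assume r': "rho' \<in> P_n"
        have sub: "omg (Phi_rho Phi rho' x) \<subseteq> {w}" using x r' omg_gen unfolding W_low_pt_def by auto
        obtain T' where T': "\<forall>q\<ge>T'. Phi_rho Phi rho' x q \<in> omg (Phi_rho Phi rho' x)"
          using ev_omg[of "Phi_rho Phi rho' x"] by blast
        have "\<forall>t\<ge>max T T'. Phi_rho Phi rho' x t = Phi_rho Phi rho mu t"
          using T T' sub Ww Wd Ob_def by auto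
        thus "\<exists>t'. \<forall>t\<ge>t'. Phi_rho Phi rho' x t = Phi_rho Phi rho mu t" by blast
      qed
    qed
    show ?thesis using c e1 e2 by blast
  qed
  have d1: "W_low_orb Phi rho mu \<noteq> {} \<Longrightarrow> card (omega_rho Phi rho mu) = 1"
  proof -
    assume "W_low_orb Phi rho mu \<noteq> {}"
    then obtain x where "x \<in> W_low_orb Phi rho mu" by blast
    thus ?thesis using low_card1[OF rP] Wd Ob_def by simp
  qed
  have d2: "W_low_orb Phi rho mu \<noteq> {}" if c1: "card (omega_rho Phi rho mu) = 1"
  proof -
    obtain w where Ww: "omega_rho Phi rho mu = {w}" using c1 card_1_singletonE by blast
    obtain T where T: "\<forall>q\<ge>T. Ob q \<in> omg Ob" using ev_omg[of Ob] by blast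
    have ev: "\<forall>q\<ge>T. Phi_rho Phi rho mu q = w" using T Ww Wd Ob_def by auto
    have fp: "Phi w = w" by (rule fixed_point[OF rP ev])
    have "w \<in> W_low_orb Phi rho mu" unfolding W_low_orb_def
    proof (intro CollectI ballI)
      fix rho' :: "real \<Rightarrow> 'n \<Rightarrow> bool" assume r': "rho' \<in> P_n"
      have "\<forall>t\<ge>T. Phi_rho Phi rho' w t = Phi_rho Phi rho mu t"
        using fixed_orbit[where Phi=Phi and w=w, OF r' fp] ev by simp
      thus "\<exists>t'. \<forall>t\<ge>t'. Phi_rho Phi rho' w t = Phi_rho Phi rho mu t" by blast
    qed
    thus ?thesis by blast
  qed
  have d3: "W_low_omega Phi rho mu \<noteq> {}" if "card (omega_rho Phi rho mu) = 1"
    using d2[OF that] c by blast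
  show ?thesis using a1 a2 b bne c d1 d2 d3 e by blast
qed


end
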